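(* Let $n_p,n,N$ be positive integers; consider images with $n$ pixels from which $N$ patches of $n_p$ pixels are extracted with unit stride and periodic boundary conditions, $\mathbf{P}_i\in\{0,1\}^{n_p\times n}$ being the binary matrix extracting patch $i$. Let $\mathbf{C}_1,\dots,\mathbf{C}_K\in\mathbb{R}^{n_p\times n_p}$ be symmetric positive semi-definite, $\sigma^2>0$, and $\beta_j^i\ge0$ with $\sum_{j=1}^K\beta_j^i=1$ for each $i$. Define $\mathbf{F}_i=\sum_{j=1}^K\beta_j^i\mathbf{C}_j(\mathbf{C}_j+\sigma^2\mathbf{I})^{-1}$ and $\mathbf{W}=\frac1{n_p}\sum_{i=1}^N\mathbf{P}_i^T\mathbf{F}_i\mathbf{P}_i$. Let $\mathbf{W}=\mathbf{Q}\Lambda\mathbf{Q}^T$ be an eigendecomposition with eigenvalues in decreasing order, $r=\mathrm{rank}(\mathbf{W})$, $\bar\Lambda$ the $r\times r$ diagonal matrix of nonzero eigenvalues and $\bar{\mathbf{Q}}$ the first $r$ columns of $\mathbf{Q}$. Then the denoiser $\mathbf{y}\mapsto\mathbf{W}\mathbf{y}$ is the proximity operator of the closed, proper, convex function $$\phi(\mathbf{x})=\iota_{S(\mathbf{W})}(\mathbf{x})+\tfrac12\,\mathbf{x}^T\bar{\mathbf{Q}}(\bar\Lambda^{-1}-\mathbf{I})\bar{\mathbf{Q}}^T\mathbf{x}.$$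
   Context: $\mathrm{prox}_\phi(\mathbf{z})=\arg\min_{\mathbf{x}}\tfrac12\|\mathbf{x}-\mathbf{z}\|_2^2+\phi(\mathbf{x})$. $S(\mathbf{W})$ is the column span of $\mathbf{W}$ and $\iota_C$ is the indicator function of a convex set $C$ ($0$ on $C$, $+\infty$ outside). *)

theory Defs
  imports "HOL-Analysis.Analysis"
begin

text \<open>Binary patch-extraction matrix: row k of patch i selects pixel idx i k.\<close>
definition patch_mat :: "('i \<Rightarrow> 'p \<Rightarrow> 'n) \<Rightarrow> 'i \<Rightarrow> real^'n^'p::finite" where
  "patch_mat idx i = (\<chi> k p. if idx i k = p then 1 else 0)"

text \<open>Indicator function of a set, as an extended-real valued function.\<close>
definition indicator_fun :: "'a set \<Rightarrow> 'a \<Rightarrow> ereal" where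
  "indicator_fun C x = (if x \<in> C then 0 else \<infinity>)"

text \<open>Epigraph of an extended-real valued function.\<close>
definition epigraph_ext :: "('a \<Rightarrow> ereal) \<Rightarrow> ('a \<times> real) set" where
  "epigraph_ext f = {(x, t). f x \<le> ereal t}"

definition proper_fun :: "('a \<Rightarrow> ereal) \<Rightarrow> bool" where
  "proper_fun f \<longleftrightarrow> (\<forall>x. f x \<noteq> -\<infinity>) \<and> (\<exists>x. f x \<noteq> \<infinity>)"

definition convex_fun :: "('a::real_vector \<Rightarrow> ereal) \<Rightarrow> bool" where
  "convex_fun f \<longleftrightarrow> convex (epigraph_ext f)"

definition closed_fun :: "('a::topological_space \<Rightarrow> ereal) \<Rightarrow> bool" where
  "closed_fun f \<longleftrightarrow> closed (epigraph_ext f)"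

text \<open>The set of minimizers of 1/2 ||x - z||^2 + phi x; the proximity operator
  prox_phi(z) is well defined and equal to p iff this set is exactly {p}.\<close>
definition prox_set :: "('a::real_normed_vector \<Rightarrow> ereal) \<Rightarrow> 'a \<Rightarrow> 'a set" where
  "prox_set \<phi> z = {p. \<forall>x. ereal (norm (p - z)^2 / 2) + \<phi> p \<le> ereal (norm (x - z)^2 / 2) + \<phi> x}"

end

theory Submission
  imports Defs
begin

lemma scaleR_mv: "(c *\<^sub>R (M::real^'n^'m)) *v x = c *\<^sub>R (M *v x)"
  by (simp add: vec_eq_iff matrix_vector_mult_def sum_distrib_left mult.assoc)
lemma sum_mv: "(\<Sum>i\<in>I. (M i::real^'n^'m)) *v x = (\<Sum>i\<in>I. M i *v x)"
  by (induction I rule: infinite_finite_induct) (auto simp: matrix_vector_mult_add_rdistrib)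
lemma mat_mv: "mat s *v (v::real^'n) = s *\<^sub>R v"
proof -
  have "mat s = s *\<^sub>R (mat 1 :: real^'n^'n)" by (simp add: vec_eq_iff mat_def)
  then show ?thesis by (simp add: scaleR_mv)
qed
lemma transpose_inner: "x \<bullet> (transpose (P::real^'n^'m) *v z) = (P *v x) \<bullet> z"
  by (metis dot_lmul_matrix inner_commute vector_transpose_matrix)

lemma G_bounds:
  fixes C :: "real^'p^'p"
  assumes psd: "\<And>v. 0 \<le> v \<bullet> (C *v v)" and s: "s > 0"
  shows "0 \<le> x \<bullet> ((C ** matrix_inv (C + mat s)) *v x) \<and> x \<bullet> ((C ** matrix_inv (C + mat s)) *v x) \<le> x \<bullet> x"
proof -
  define A where "A = C + mat s"
  have Av: "A *v v = C *v v + s *\<^sub>R v" for v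
    by (simp add: A_def matrix_vector_mult_add_rdistrib mat_mv)
  have "v = 0" if "A *v v = 0" for v
  proof -
    have "0 = v \<bullet> (A *v v)" using that by simp
    also have "\<dots> = v \<bullet> (C *v v) + s * (v \<bullet> v)" by (simp add: Av inner_add_right)
    finally have "s * (v \<bullet> v) \<le> 0" using psd[of v] by linarith
    then have "v \<bullet> v \<le> 0" using s by (simp add: mult_le_0_iff)
    then show ?thesis by (metis inner_eq_zero_iff inner_ge_zero order_antisym)
  qed
  then have "\<exists>B. B ** A = mat 1" using matrix_left_invertible_ker by blast
  then have "invertible A" using invertible_left_inverse by blast
  then have AA: "A ** matrix_inv A = mat 1"
    unfolding invertible_def matrix_inv_def by (rule someI2_ex) auto
  define y where "y = matrix_inv A *v x"
  have xy: "x = C *v y + s *\<^sub>R y"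
    by (metis Av AA matrix_vector_mul_assoc matrix_vector_mul_lid y_def)
  have G: "(C ** matrix_inv A) *v x = C *v y"
    by (simp add: y_def matrix_vector_mul_assoc)
  have e1: "x \<bullet> (C *v y) = (C *v y) \<bullet> (C *v y) + s * (y \<bullet> (C *v y))"
    by (subst xy) (simp add: inner_add_left inner_add_right inner_commute[of "C *v y" y])
  have e2: "x \<bullet> x = (C *v y) \<bullet> (C *v y) + 2 * s * (y \<bullet> (C *v y)) + s * s * (y \<bullet> y)"
    by (subst (1 2) xy) (simp add: inner_add_left inner_add_right inner_commute algebra_simps)
  have p: "0 \<le> y \<bullet> (C *v y)" by (rule psd)
  have "0 \<le> y \<bullet> y" by simp
  then show ?thesis
    unfolding A_def[symmetric] G e1 e2 using p s
    by (simp add: add_nonneg_nonneg mult_nonneg_nonneg)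
qed

lemma vtp: "x \<bullet> (z v* (P::real^'n^'m)) = (P *v x) \<bullet> z"
  by (metis dot_lmul_matrix inner_commute)

lemma patch_apply: "(patch_mat idx i *v x) $ k = x $ idx i k"
proof -
  have "(patch_mat idx i *v x) $ k = (\<Sum>j\<in>UNIV. (if idx i k = j then 1 else 0) * x $ j)"
    by (simp add: patch_mat_def matrix_vector_mult_def)
  also have "\<dots> = (\<Sum>j\<in>UNIV. (if idx i k = j then x $ j else 0))"
    by (rule sum.cong) auto
  finally show ?thesis by simp
qed
lemma patch_sum:
  fixes idx :: "'i::finite \<Rightarrow> 'p::finite \<Rightarrow> 'n::finite"
  assumes cover: "\<And>x. card {(i, k). idx i k = x} = CARD('p)"
  shows "(\<Sum>i\<in>UNIV. (patch_mat idx i *v x) \<bullet> (patch_mat idx i *v x)) = real CARD('p) * (x \<bullet> x)"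
proof -
  have "(\<Sum>i\<in>UNIV. (patch_mat idx i *v x) \<bullet> (patch_mat idx i *v x))
      = (\<Sum>i\<in>UNIV. \<Sum>k\<in>UNIV. (x $ idx i k)^2)"
    by (simp add: inner_vec_def patch_apply power2_eq_square)
  also have "\<dots> = (\<Sum>ik\<in>UNIV. (x $ (case_prod idx ik))^2)"
    unfolding UNIV_Times_UNIV[symmetric] sum.cartesian_product by (simp add: split_def)
  also have "\<dots> = (\<Sum>a\<in>UNIV. \<Sum>ik\<in>{ik\<in>UNIV. case_prod idx ik = a}. (x $ (case_prod idx ik))^2)"
    by (rule sum.group[symmetric]) auto
  also have "\<dots> = (\<Sum>a\<in>UNIV. real CARD('p) * (x $ a)^2)"
  proof (rule sum.cong[OF refl])
    fix a
    have "{ik\<in>UNIV. case_prod idx ik = a} = {(i, k). idx i k = a}" by auto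
    have "(\<Sum>ik\<in>{ik\<in>UNIV. case_prod idx ik = a}. (x $ (case_prod idx ik))^2)
        = (\<Sum>ik\<in>{ik\<in>UNIV. case_prod idx ik = a}. (x $ a)^2)"
      by (rule sum.cong) auto
    moreover have "(\<Sum>ik\<in>{ik\<in>UNIV. case_prod idx ik = a}. (x $ a)^2) = real CARD('p) * (x $ a)^2"
      using cover[of a] \<open>{ik\<in>UNIV. case_prod idx ik = a} = {(i, k). idx i k = a}\<close> by (simp only: sum_constant)
    ultimately show "(\<Sum>ik\<in>{ik\<in>UNIV. case_prod idx ik = a}. (x $ (case_prod idx ik))^2) = real CARD('p) * (x $ a)^2"
      by simp
  qed
  also have "\<dots> = real CARD('p) * (x \<bullet> x)"
    by (simp add: inner_vec_def sum_distrib_left power2_eq_square)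
  finally show ?thesis .
qed



lemma down_closed:
  assumes "\<And>l k. l \<in> T \<Longrightarrow> k < l \<Longrightarrow> k \<in> T" "finite (T::nat set)"
  shows "T = {..<card T}"
proof (cases "T = {}")
  case True then show ?thesis by simp
next
  case False
  have "T = {..Max T}"
  proof
    show "T \<subseteq> {..Max T}" using assms(2) by auto
    show "{..Max T} \<subseteq> T"
    proof
      fix x assume "x \<in> {..Max T}"
      then have "x \<le> Max T" by simp
      moreover have "Max T \<in> T" using False assms(2) by simp
      ultimately show "x \<in> T" using assms(1) by (cases "x = Max T") auto
    qed
  qed
  then show ?thesis by (metis card_atMost lessThan_Suc_atMost)
qed

lemma sq_convex:
  fixes a b u v :: real
  assumes "u \<ge> 0" "v \<ge> 0" "u + v = 1"
  shows "(u * a + v * b)^2 \<le> u * a^2 + v * b^2"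
proof -
  have "u * a^2 + v * b^2 - (u * a + v * b)^2 = u * v * (a - b)^2"
  proof -
    have v: "v = 1 - u" using assms(3) by simp
    show ?thesis unfolding v by (simp add: power2_eq_square algebra_simps)
  qed
  moreover have "u * v * (a - b)^2 \<ge> 0" using assms by simp
  ultimately show ?thesis by linarith
qed

lemma term_id:
  fixes a b l :: real
  assumes "l > 0"
  shows "(a - b)^2 + (1 / l - 1) * a^2 = (a - l * b)^2 / l + (1 - l) * b^2"
proof -
  have "l * ((a - b)^2 + (1 / l - 1) * a^2) = l * ((a - l * b)^2 / l + (1 - l) * b^2)"
    using assms by (simp add: field_simps power2_eq_square)
  then show ?thesis using assms by simp
qed

lemma orth_expand:
  fixes q :: "nat \<Rightarrow> real^'n"
  assumes Q_orth: "\<And>k l. k < CARD('n) \<Longrightarrow> l < CARD('n) \<Longrightarrow>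
                   q k \<bullet> q l = (if k = l then 1 else 0)"
  shows "v = (\<Sum>k<CARD('n). (q k \<bullet> v) *\<^sub>R q k)"
proof -
  let ?N = "CARD('n)"
  define B where "B = q ` {..<?N}"
  have inj: "inj_on q {..<?N}"
  proof (rule inj_onI)
    fix k l assume "k \<in> {..<?N}" "l \<in> {..<?N}" "q k = q l"
    then show "k = l" using Q_orth[of k l] Q_orth[of k k] by (auto split: if_splits)
  qed
  have indep: "independent B"
  proof (rule pairwise_orthogonal_independent)
    show "pairwise orthogonal B"
      unfolding pairwise_def B_def orthogonal_def using Q_orth by auto
    show "0 \<notin> B" unfolding B_def using Q_orth by (auto) (metis inner_zero_left zero_neq_one)
  qed
  have cardB: "card B = ?N" unfolding B_def using inj by (simp add: card_image)
  have "dim (UNIV :: (real^'n) set) = ?N" by simp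
  then have sp: "UNIV \<subseteq> span B"
    using card_ge_dim_independent[of B UNIV] indep cardB by simp
  define u where "u = v - (\<Sum>k<?N. (q k \<bullet> v) *\<^sub>R q k)"
  have uq: "u \<bullet> q l = 0" if "l < ?N" for l
  proof -
    have "(\<Sum>k<?N. (q k \<bullet> v) *\<^sub>R q k) \<bullet> q l = (\<Sum>k<?N. (q k \<bullet> v) * (q k \<bullet> q l))"
      by (simp add: inner_sum_left)
    also have "\<dots> = (\<Sum>k<?N. if k = l then q l \<bullet> v else 0)"
      by (rule sum.cong) (use Q_orth that in auto)
    also have "\<dots> = q l \<bullet> v" using that by simp
    finally have h: "(\<Sum>k<?N. (q k \<bullet> v) *\<^sub>R q k) \<bullet> q l = q l \<bullet> v" .
    show ?thesis unfolding u_def inner_diff_left h by (simp add: inner_commute)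
  qed
  have "orthogonal u u"
  proof (rule orthogonal_to_span)
    show "u \<in> span B" using sp by auto
    show "orthogonal u x" if "x \<in> B" for x
      using that uq unfolding B_def orthogonal_def by auto
  qed
  then have "u = 0" by (simp add: orthogonal_def)
  then show ?thesis by (simp add: u_def)
qed

lemma orth_norm:
  fixes q :: "nat \<Rightarrow> real^'n"
  assumes Q_orth: "\<And>k l. k < CARD('n) \<Longrightarrow> l < CARD('n) \<Longrightarrow>
                   q k \<bullet> q l = (if k = l then 1 else 0)"
  shows "(norm v)^2 = (\<Sum>k<CARD('n). (q k \<bullet> v)^2)"
proof -
  have "(norm v)^2 = v \<bullet> v" by (simp add: power2_norm_eq_inner)
  also have "\<dots> = v \<bullet> (\<Sum>k<CARD('n). (q k \<bullet> v) *\<^sub>R q k)"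
    using orth_expand[OF Q_orth] by metis
  also have "\<dots> = (\<Sum>k<CARD('n). (q k \<bullet> v)^2)"
    by (simp add: inner_sum_right inner_commute power2_eq_square)
  finally show ?thesis .
qed

theorem corollary1:
  fixes idx :: "'i::finite \<Rightarrow> 'p::finite \<Rightarrow> 'n::finite"
    and C :: "'k::finite \<Rightarrow> real^'p^'p"
    and \<sigma> :: real
    and \<beta> :: "'i \<Rightarrow> 'k \<Rightarrow> real"
    and F :: "'i \<Rightarrow> real^'p^'p"
    and W :: "real^'n^'n"
    and q :: "nat \<Rightarrow> real^'n"
    and lam :: "nat \<Rightarrow> real"
    and r :: nat
    and \<phi> :: "real^'n \<Rightarrow> ereal"
  assumes patch_inj: "\<And>i. inj (idx i)"
    and patch_cover: "\<And>x. card {(i, k). idx i k = x} = CARD('p)"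
    and C_sym: "\<And>j. transpose (C j) = C j"
    and C_psd: "\<And>j v. 0 \<le> v \<bullet> (C j *v v)"
    and sigma_pos: "\<sigma>\<^sup>2 > 0"
    and beta_nonneg: "\<And>i j. \<beta> i j \<ge> 0"
    and beta_sum: "\<And>i. (\<Sum>j\<in>UNIV. \<beta> i j) = 1"
    and F_def: "\<And>i. F i = (\<Sum>j\<in>UNIV. \<beta> i j *\<^sub>R (C j ** matrix_inv (C j + mat (\<sigma>\<^sup>2))))"
    and W_def: "W = (1 / real CARD('p)) *\<^sub>R
                    (\<Sum>i\<in>UNIV. transpose (patch_mat idx i) ** F i ** patch_mat idx i)"
    and Q_orth: "\<And>k l. k < CARD('n) \<Longrightarrow> l < CARD('n) \<Longrightarrow>
                   q k \<bullet> q l = (if k = l then 1 else 0)"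
    and W_eig: "W = (\<chi> a b. \<Sum>k<CARD('n). q k $ a * lam k * q k $ b)"
    and lam_decr: "\<And>k l. k \<le> l \<Longrightarrow> l < CARD('n) \<Longrightarrow> lam l \<le> lam k"
    and r_def: "r = rank W"
    and phi_def: "\<And>x. \<phi> x = indicator_fun (span (columns W)) x +
                   ereal ((1/2) * (\<Sum>k<r. (1 / lam k - 1) * (q k \<bullet> x)\<^sup>2))"
  shows "closed_fun \<phi> \<and> proper_fun \<phi> \<and> convex_fun \<phi> \<and>
         (\<forall>y. prox_set \<phi> y = {W *v y})"
proof -
  let ?N = "CARD('n)"
  let ?P = "patch_mat idx"
  \<comment> \<open>bounds on F\<close>
  have Fb: "0 \<le> z \<bullet> (F i *v z) \<and> z \<bullet> (F i *v z) \<le> z \<bullet> z" for i z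
  proof -
    let ?G = "\<lambda>j. C j ** matrix_inv (C j + mat (\<sigma>\<^sup>2))"
    have e: "z \<bullet> (F i *v z) = (\<Sum>j\<in>UNIV. \<beta> i j * (z \<bullet> (?G j *v z)))"
      by (simp add: F_def sum_mv scaleR_mv inner_sum_right)
    have gb: "0 \<le> z \<bullet> (?G j *v z) \<and> z \<bullet> (?G j *v z) \<le> z \<bullet> z" for j
      by (rule G_bounds[OF C_psd sigma_pos])
    have "0 \<le> (\<Sum>j\<in>UNIV. \<beta> i j * (z \<bullet> (?G j *v z)))"
      using gb beta_nonneg by (simp add: sum_nonneg)
    moreover have "(\<Sum>j\<in>UNIV. \<beta> i j * (z \<bullet> (?G j *v z))) \<le> (\<Sum>j\<in>UNIV. \<beta> i j * (z \<bullet> z))"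
      by (rule sum_mono) (use gb beta_nonneg in \<open>simp add: mult_left_mono\<close>)
    moreover have "(\<Sum>j\<in>UNIV. \<beta> i j * (z \<bullet> z)) = z \<bullet> z"
      by (simp add: beta_sum flip: sum_distrib_right)
    ultimately show ?thesis using e by simp
  qed
  \<comment> \<open>bounds on W\<close>
  have cp: "real CARD('p) > 0" by simp
  have Wb: "0 \<le> x \<bullet> (W *v x) \<and> x \<bullet> (W *v x) \<le> x \<bullet> x" for x
  proof -
    have e: "x \<bullet> (W *v x) = (1 / real CARD('p)) * (\<Sum>i\<in>UNIV. (?P i *v x) \<bullet> (F i *v (?P i *v x)))"
      by (simp add: W_def scaleR_mv sum_mv inner_sum_right vtp flip: matrix_vector_mul_assoc)
    have s1: "0 \<le> (\<Sum>i\<in>UNIV. (?P i *v x) \<bullet> (F i *v (?P i *v x)))"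
      using Fb by (simp add: sum_nonneg)
    have "(\<Sum>i\<in>UNIV. (?P i *v x) \<bullet> (F i *v (?P i *v x))) \<le> (\<Sum>i\<in>UNIV. (?P i *v x) \<bullet> (?P i *v x))"
      using Fb by (simp add: sum_mono)
    also have "\<dots> = real CARD('p) * (x \<bullet> x)" by (rule patch_sum[OF patch_cover])
    finally have s2: "(\<Sum>i\<in>UNIV. (?P i *v x) \<bullet> (F i *v (?P i *v x))) \<le> real CARD('p) * (x \<bullet> x)" .
    show ?thesis unfolding e using s1 s2 cp
      by (auto simp: field_simps)
  qed
  \<comment> \<open>spectral facts\<close>
  have Wv: "W *v v = (\<Sum>k<?N. (lam k * (q k \<bullet> v)) *\<^sub>R q k)" for v
  proof -
    have "(W *v v) $ a = (\<Sum>k<?N. (lam k * (q k \<bullet> v)) *\<^sub>R q k) $ a" for a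
    proof -
      have "(W *v v) $ a = (\<Sum>b\<in>UNIV. \<Sum>k<?N. q k $ a * lam k * q k $ b * v $ b)"
        by (simp add: W_eig matrix_vector_mult_def sum_distrib_right)
      also have "\<dots> = (\<Sum>k<?N. \<Sum>b\<in>UNIV. q k $ a * lam k * q k $ b * v $ b)"
        by (rule sum.swap)
      also have "\<dots> = (\<Sum>k<?N. (lam k * (q k \<bullet> v)) * q k $ a)"
        by (rule sum.cong) (simp_all add: inner_vec_def sum_distrib_left sum_distrib_right mult_ac)
      finally show ?thesis by (simp add: sum_component)
    qed
    then show ?thesis by (simp add: vec_eq_iff)
  qed
  have qW: "q l \<bullet> (W *v v) = lam l * (q l \<bullet> v)" if "l < ?N" for l v
  proof -
    have "q l \<bullet> (W *v v) = (\<Sum>k<?N. lam k * (q k \<bullet> v) * (q l \<bullet> q k))"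
      by (simp add: Wv inner_sum_right)
    also have "\<dots> = (\<Sum>k<?N. if k = l then lam l * (q l \<bullet> v) else 0)"
      by (rule sum.cong) (use Q_orth that in auto)
    also have "\<dots> = lam l * (q l \<bullet> v)" using that by simp
    finally show ?thesis .
  qed
  have lam01: "0 \<le> lam k \<and> lam k \<le> 1" if "k < ?N" for k
  proof -
    have "lam k = q k \<bullet> (W *v q k)" using qW[OF that, of "q k"] Q_orth[OF that that] by simp
    moreover have "q k \<bullet> q k = 1" using Q_orth[OF that that] by simp
    ultimately show ?thesis using Wb[of "q k"] by simp
  qed
  define m where "m = card {k. k < ?N \<and> lam k \<noteq> 0}"
  have Tm: "{k. k < ?N \<and> lam k \<noteq> 0} = {..<m}"
    unfolding m_def
  proof (rule down_closed)
    fix l k assume l: "l \<in> {k. k < ?N \<and> lam k \<noteq> 0}" and "k < l"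
    then have "lam l \<le> lam k" "k < ?N" using lam_decr[of k l] by auto
    then show "k \<in> {k. k < ?N \<and> lam k \<noteq> 0}" using l lam01 by force
  qed simp
  have mN: "m \<le> ?N"
  proof -
    have "m \<le> card {..<?N}" unfolding m_def by (rule card_mono) auto
    then show ?thesis by simp
  qed
  have lam_pos: "lam k > 0" if "k < m" for k
    using Tm that lam01 by (metis (mono_tags, lifting) lessThan_iff mem_Collect_eq order_le_less)
  have lam_zero: "lam k = 0" if "m \<le> k" "k < ?N" for k
    using Tm that by (metis (mono_tags, lifting) lessThan_iff mem_Collect_eq not_le)
  have expand: "v = (\<Sum>k<?N. (q k \<bullet> v) *\<^sub>R q k)" for v
    by (rule orth_expand[OF Q_orth])
  \<comment> \<open>range characterization\<close>
  have rng: "v \<in> range ((*v) W) \<longleftrightarrow> (\<forall>k. m \<le> k \<and> k < ?N \<longrightarrow> q k \<bullet> v = 0)" for v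
  proof
    assume "v \<in> range ((*v) W)"
    then obtain z where z: "v = W *v z" by auto
    show "\<forall>k. m \<le> k \<and> k < ?N \<longrightarrow> q k \<bullet> v = 0"
      using qW lam_zero z by auto
  next
    assume h: "\<forall>k. m \<le> k \<and> k < ?N \<longrightarrow> q k \<bullet> v = 0"
    define z where "z = (\<Sum>k<m. ((q k \<bullet> v) / lam k) *\<^sub>R q k)"
    have qz: "q l \<bullet> z = (if l < m then (q l \<bullet> v) / lam l else 0)" if "l < ?N" for l
    proof -
      have "q l \<bullet> z = (\<Sum>k<m. ((q k \<bullet> v) / lam k) * (q l \<bullet> q k))"
        by (simp add: z_def inner_sum_right)
      also have "\<dots> = (\<Sum>k<m. if k = l then (q l \<bullet> v) / lam l else 0)"
        by (rule sum.cong) (use Q_orth that mN in auto)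
      also have "\<dots> = (if l < m then (q l \<bullet> v) / lam l else 0)" by simp
      finally show ?thesis .
    qed
    have "W *v z = (\<Sum>k<?N. (lam k * (q k \<bullet> z)) *\<^sub>R q k)" by (rule Wv)
    also have "\<dots> = (\<Sum>k<?N. (q k \<bullet> v) *\<^sub>R q k)"
    proof (rule sum.cong[OF refl])
      fix k assume "k \<in> {..<?N}"
      then have k: "k < ?N" by simp
      show "(lam k * (q k \<bullet> z)) *\<^sub>R q k = (q k \<bullet> v) *\<^sub>R q k"
        using qz[OF k] lam_pos[of k] h k by (cases "k < m") auto
    qed
    also have "\<dots> = v" using expand[of v] by simp
    finally show "v \<in> range ((*v) W)" by (metis rangeI)
  qed
  have rng_span: "range ((*v) W) = span (q ` {..<m})"
  proof
    show "range ((*v) W) \<subseteq> span (q ` {..<m})"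
    proof
      fix v assume v: "v \<in> range ((*v) W)"
      have "v = (\<Sum>k<?N. (q k \<bullet> v) *\<^sub>R q k)" by (rule expand)
      also have "\<dots> = (\<Sum>k<?N. if k < m then (q k \<bullet> v) *\<^sub>R q k else 0)"
        by (rule sum.cong) (use v rng in auto)
      also have "\<dots> = (\<Sum>k\<in>{..<?N} \<inter> {..<m}. (q k \<bullet> v) *\<^sub>R q k)"
        by (simp add: sum.inter_restrict)
      also have "{..<?N} \<inter> {..<m} = {..<m}" using mN by auto
      finally have "v = (\<Sum>k<m. (q k \<bullet> v) *\<^sub>R q k)" .
      then show "v \<in> span (q ` {..<m})"
        by (metis (no_types, lifting) imageI lessThan_iff span_base span_scale span_sum)
    qed
    have sub: "subspace (range ((*v) W))"
      by (rule linear_subspace_image[OF matrix_vector_mul_linear subspace_UNIV])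
    have "q ` {..<m} \<subseteq> range ((*v) W)"
    proof
      fix x assume "x \<in> q ` {..<m}"
      then obtain k where k: "k < m" "x = q k" by auto
      have "q l \<bullet> q k = 0" if "m \<le> l" "l < ?N" for l
        using Q_orth[of l k] that k mN by auto
      then show "x \<in> range ((*v) W)" using rng k by auto
    qed
    then show "span (q ` {..<m}) \<subseteq> range ((*v) W)"
      using sub by (rule span_minimal)
  qed
  have indep_m: "independent (q ` {..<m})"
  proof (rule pairwise_orthogonal_independent)
    show "pairwise orthogonal (q ` {..<m})"
      unfolding pairwise_def orthogonal_def using Q_orth mN by auto
    show "0 \<notin> q ` {..<m}" using Q_orth mN
      by (auto) (metis inner_zero_left less_le_trans zero_neq_one)
  qed
  have inj_m: "inj_on q {..<m}"
  proof (rule inj_onI)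
    fix k l assume "k \<in> {..<m}" "l \<in> {..<m}" "q k = q l"
    then show "k = l" using Q_orth[of k l] Q_orth[of k k] mN by (auto split: if_splits)
  qed
  have rm: "r = m"
  proof -
    have "r = dim (range ((*v) W))" unfolding r_def by (rule rank_dim_range)
    also have "\<dots> = card (q ` {..<m})" unfolding rng_span dim_span
      by (rule dim_eq_card_independent[OF indep_m])
    also have "\<dots> = m" using inj_m by (simp add: card_image)
    finally show ?thesis .
  qed
  define S where "S = span (columns W)"
  have S_rng: "S = range ((*v) W)"
  proof
    show "S \<subseteq> range ((*v) W)" unfolding S_def
      by (rule span_minimal) (auto simp: columns_image_basis
          intro: linear_subspace_image[OF matrix_vector_mul_linear subspace_UNIV])
    show "range ((*v) W) \<subseteq> S" unfolding S_def using matrix_vector_mult_in_columnspace by auto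
  qed
  have memS: "v \<in> S \<longleftrightarrow> (\<forall>k. r \<le> k \<and> k < ?N \<longrightarrow> q k \<bullet> v = 0)" for v
    using rng S_rng rm by simp
  have subS: "subspace S" unfolding S_def by simp
  \<comment> \<open>the function\<close>
  define f where "f x = (1/2) * (\<Sum>k<r. (1 / lam k - 1) * (q k \<bullet> x)\<^sup>2)" for x
  have phi: "\<phi> x = (if x \<in> S then ereal (f x) else \<infinity>)" for x
    by (simp add: phi_def indicator_fun_def S_def f_def)
  have c_nonneg: "0 \<le> 1 / lam k - 1" if "k < r" for k
  proof -
    have "0 < lam k" "lam k \<le> 1" using lam_pos lam01 that rm mN by auto
    then show ?thesis by (simp add: field_simps)
  qed
  have epi: "epigraph_ext \<phi> = {p. fst p \<in> S \<and> f (fst p) \<le> snd p}"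
    by (auto simp: epigraph_ext_def phi split: if_splits)
  have fconv: "f (u *\<^sub>R x + v *\<^sub>R y) \<le> u * f x + v * f y"
    if "u \<ge> 0" "v \<ge> 0" "u + v = 1" for u v x y
  proof -
    have "(\<Sum>k<r. (1 / lam k - 1) * (q k \<bullet> (u *\<^sub>R x + v *\<^sub>R y))\<^sup>2)
       \<le> (\<Sum>k<r. (1 / lam k - 1) * (u * (q k \<bullet> x)\<^sup>2 + v * (q k \<bullet> y)\<^sup>2))"
    proof (rule sum_mono)
      fix k assume "k \<in> {..<r}"
      then have c: "0 \<le> 1 / lam k - 1" using c_nonneg by simp
      have "(q k \<bullet> (u *\<^sub>R x + v *\<^sub>R y))\<^sup>2 \<le> u * (q k \<bullet> x)\<^sup>2 + v * (q k \<bullet> y)\<^sup>2"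
        using sq_convex[OF that, of "q k \<bullet> x" "q k \<bullet> y"] by (simp add: inner_add_right)
      then show "(1 / lam k - 1) * (q k \<bullet> (u *\<^sub>R x + v *\<^sub>R y))\<^sup>2
         \<le> (1 / lam k - 1) * (u * (q k \<bullet> x)\<^sup>2 + v * (q k \<bullet> y)\<^sup>2)"
        using c by (rule mult_left_mono)
    qed
    also have "\<dots> = u * (\<Sum>k<r. (1 / lam k - 1) * (q k \<bullet> x)\<^sup>2) + v * (\<Sum>k<r. (1 / lam k - 1) * (q k \<bullet> y)\<^sup>2)"
      unfolding sum_distrib_left sum.distrib[symmetric] by (rule sum.cong) (simp_all add: algebra_simps)
    finally show ?thesis unfolding f_def by simp
  qed
  have closed_part: "closed_fun \<phi>"
  proof -
    have cS: "closed S" using subS by (rule closed_subspace)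
    have cf: "continuous_on UNIV f" unfolding f_def by (intro continuous_intros)
    have "{p. fst p \<in> S \<and> f (fst p) \<le> snd p} = (S \<times> UNIV) \<inter> {p. f (fst p) \<le> snd p}" by auto
    moreover have "closed {p::(real^'n) \<times> real. f (fst p) \<le> snd p}"
      by (rule closed_Collect_le) (intro continuous_intros continuous_on_compose2[OF cf] | auto)+
    ultimately show ?thesis unfolding closed_fun_def epi
      using cS by (simp add: closed_Int closed_Times)
  qed
  have proper_part: "proper_fun \<phi>"
    unfolding proper_fun_def
  proof
    show "\<forall>x. \<phi> x \<noteq> - \<infinity>" by (simp add: phi)
    have "0 \<in> S" using subS by (rule subspace_0)
    then show "\<exists>x. \<phi> x \<noteq> \<infinity>" by (auto simp: phi intro!: exI[of _ 0])
  qed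
  have convex_part: "convex_fun \<phi>"
    unfolding convex_fun_def epi
  proof (rule convexI)
    fix p1 p2 :: "(real^'n) \<times> real" and u v :: real
    assume p1: "p1 \<in> {p. fst p \<in> S \<and> f (fst p) \<le> snd p}"
      and p2: "p2 \<in> {p. fst p \<in> S \<and> f (fst p) \<le> snd p}"
      and uv0: "0 \<le> u" and uv1: "0 \<le> v" and uv2: "u + v = 1"
    note uv = uv0 uv1 uv2
    have "u *\<^sub>R fst p1 + v *\<^sub>R fst p2 \<in> S" using p1 p2 subS
      by (simp add: subspace_add subspace_scale)
    moreover have "f (u *\<^sub>R fst p1 + v *\<^sub>R fst p2) \<le> u * snd p1 + v * snd p2"
    proof -
      have "f (u *\<^sub>R fst p1 + v *\<^sub>R fst p2) \<le> u * f (fst p1) + v * f (fst p2)"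
        using fconv uv by simp
      also have "\<dots> \<le> u * snd p1 + v * snd p2"
        using p1 p2 uv by (simp add: add_mono mult_left_mono)
      finally show ?thesis .
    qed
    ultimately show "u *\<^sub>R p1 + v *\<^sub>R p2 \<in> {p. fst p \<in> S \<and> f (fst p) \<le> snd p}" by simp
  qed
  \<comment> \<open>prox\<close>
  have prox_part: "prox_set \<phi> y = {W *v y}" for y
  proof -
    define b where "b k = q k \<bullet> y" for k
    define D where "D x = (\<Sum>k<?N. if k < r then (q k \<bullet> x - lam k * b k)\<^sup>2 / lam k else 0)" for x
    define K where "K = (\<Sum>k<?N. if k < r then (1 - lam k) * (b k)\<^sup>2 else (b k)\<^sup>2)"
    have rN: "r \<le> ?N" using rm mN by simp
    have lp: "lam k > 0" if "k < r" for k using lam_pos that rm by simp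
    have key: "norm (x - y)^2 / 2 + f x = (D x + K) / 2" if xS: "x \<in> S" for x
    proof -
      have n: "norm (x - y)^2 = (\<Sum>k<?N. (q k \<bullet> x - b k)\<^sup>2)"
        by (simp add: orth_norm[OF Q_orth] b_def inner_diff_right)
      have fx: "(\<Sum>k<r. (1 / lam k - 1) * (q k \<bullet> x)\<^sup>2)
          = (\<Sum>k<?N. if k < r then (1 / lam k - 1) * (q k \<bullet> x)\<^sup>2 else 0)"
      proof -
        have e: "{..<?N} \<inter> {..<r} = {..<r}" using rN by auto
        have "(\<Sum>k\<in>{..<?N} \<inter> {..<r}. (1 / lam k - 1) * (q k \<bullet> x)\<^sup>2)
           = (\<Sum>k<?N. if k \<in> {..<r} then (1 / lam k - 1) * (q k \<bullet> x)\<^sup>2 else 0)"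
          by (rule sum.inter_restrict) simp
        then show ?thesis unfolding e by simp
      qed
      have "(\<Sum>k<?N. (q k \<bullet> x - b k)\<^sup>2) + (\<Sum>k<?N. if k < r then (1 / lam k - 1) * (q k \<bullet> x)\<^sup>2 else 0)
          = (\<Sum>k<?N. (q k \<bullet> x - b k)\<^sup>2 + (if k < r then (1 / lam k - 1) * (q k \<bullet> x)\<^sup>2 else 0))"
        by (simp add: sum.distrib)
      also have "\<dots> = (\<Sum>k<?N. (if k < r then (q k \<bullet> x - lam k * b k)\<^sup>2 / lam k else 0)
             + (if k < r then (1 - lam k) * (b k)\<^sup>2 else (b k)\<^sup>2))"
      proof (rule sum.cong[OF refl])
        fix k assume "k \<in> {..<?N}"
        then have k: "k < ?N" by simp
        show "(q k \<bullet> x - b k)\<^sup>2 + (if k < r then (1 / lam k - 1) * (q k \<bullet> x)\<^sup>2 else 0) =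
          (if k < r then (q k \<bullet> x - lam k * b k)\<^sup>2 / lam k else 0) + (if k < r then (1 - lam k) * (b k)\<^sup>2 else (b k)\<^sup>2)"
        proof (cases "k < r")
          case True then show ?thesis using term_id[OF lp[OF True]] by simp
        next
          case False then have "q k \<bullet> x = 0" using xS memS k by auto
          then show ?thesis using False by simp
        qed
      qed
      also have "\<dots> = D x + K" by (simp add: D_def K_def sum.distrib)
      finally show ?thesis unfolding f_def n fx by simp
    qed
    have Dnn: "D x \<ge> 0" for x
      unfolding D_def by (rule sum_nonneg) (auto intro!: divide_nonneg_pos lp)
    define p where "p = W *v y"
    have pS: "p \<in> S" unfolding p_def S_rng by simp
    have qp: "q k \<bullet> p = lam k * b k" if "k < ?N" for k
      unfolding p_def b_def using qW[OF that] .
    have Dp: "D p = 0" unfolding D_def using qp by (intro sum.neutral) auto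
    have uniq: "x = p" if "x \<in> S" "D x = 0" for x
    proof -
      have Z: "\<forall>k\<in>{..<?N}. (if k < r then (q k \<bullet> x - lam k * b k)\<^sup>2 / lam k else 0) = 0"
        using that(2) unfolding D_def by (subst sum_nonneg_eq_0_iff[symmetric]) (auto intro!: divide_nonneg_pos lp)
      then have c: "q k \<bullet> x = q k \<bullet> p" if "k < ?N" for k
      proof (cases "k < r")
        case True
        then have "(q k \<bullet> x - lam k * b k)\<^sup>2 / lam k = 0" using Z[rule_format, of k] that True by simp
        then show ?thesis using lp[OF True] qp[OF that] by simp
      next
        case False
        then show ?thesis using memS \<open>x \<in> S\<close> pS that by auto
      qed
      have "x = (\<Sum>k<?N. (q k \<bullet> x) *\<^sub>R q k)" by (rule expand)
      also have "\<dots> = (\<Sum>k<?N. (q k \<bullet> p) *\<^sub>R q k)" by (rule sum.cong) (use c in auto)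
      also have "\<dots> = p" using expand[of p] by simp
      finally show ?thesis .
    qed
    have Ein: "ereal (norm (x - y)^2 / 2) + \<phi> x = ereal ((D x + K) / 2)" if "x \<in> S" for x
      using that key[OF that] by (simp add: phi)
    have Eout: "ereal (norm (x - y)^2 / 2) + \<phi> x = \<infinity>" if "x \<notin> S" for x
      using that by (simp add: phi)
    show ?thesis
    proof
      show "prox_set \<phi> y \<subseteq> {W *v y}"
      proof
        fix z assume "z \<in> prox_set \<phi> y"
        then have h: "ereal (norm (z - y)^2 / 2) + \<phi> z \<le> ereal (norm (p - y)^2 / 2) + \<phi> p"
          unfolding prox_set_def by blast
        have zS: "z \<in> S"
        proof (rule ccontr)
          assume "z \<notin> S"
          then show False using h Eout Ein[OF pS] by simp
        qed
        then have "(D z + K) / 2 \<le> (D p + K) / 2" using h Ein pS by simp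
        then have "D z = 0" using Dp Dnn[of z] by simp
        then have "z = p" using uniq zS by simp
        then show "z \<in> {W *v y}" by (simp add: p_def)
      qed
      show "{W *v y} \<subseteq> prox_set \<phi> y"
      proof -
        have "ereal (norm (p - y)^2 / 2) + \<phi> p \<le> ereal (norm (x - y)^2 / 2) + \<phi> x" for x
        proof (cases "x \<in> S")
          case True then show ?thesis using Ein[OF True] Ein[OF pS] Dp Dnn[of x] by simp
        next
          case False then show ?thesis using Eout by simp
        qed
        then show ?thesis unfolding prox_set_def p_def by auto
      qed
    qed
  qed
  show ?thesis using closed_part proper_part convex_part prox_part by blast
qed

end
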